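(* Let $G$ be an admissible kernel and let $h:\mathbb R\to\mathbb R$ be Lipschitz continuous with $|h(x)|\le C(1+|x|^\zeta)$ for some $\zeta\in(0,1)$, $C>0$. For $n\in\mathbb N$ let $\alpha_n,g_n\in\mathcal L^2$, and let $\mathcal J_n$ be the functional $\mathcal J$ with $\alpha$ replaced by $\alpha_n$ and $g$ replaced by $g_n$ (all other data unchanged). If $\|\alpha_n-\alpha\|\to0$ and $\|g_n-g\|\to0$ as $n\to\infty$, then $$\sup_{u\in\mathcal L^2}\mathcal J_n(u)\to\sup_{u\in\mathcal L^2}\mathcal J(u)\quad (n\to\infty).$$
   Context: Fix $T>0$ and a filtered probability space $(\Omega,\mathcal F,(\mathcal F_t)_{t\in[0,T]},\mathbb P)$ satisfying the usual conditions; $\mathbb E_t$ denotes conditional expectation given $\mathcal F_t$. Let $\mathcal L^2$ be the Hilbert space of progressively measurable $f:[0,T]\times\Omega\to\mathbb R$ with $\mathbb E\int_0^T f_t^2\,dt<\infty$, with norm $\|f\|=(\mathbb E\int_0^Tf_t^2dt)^{1/2}$. A Volterra kernel $G:[0,T]^2\to\mathbb R$ is admissible if $\sup_{t\in[0,T]}\int_0^t|G(t,s)|^2ds<\infty$; $(\mathbf Gu)_t=\int_0^tG(t,s)u_s\,ds$. Model data: constants $X_0>0$, $\gamma>0$, $\phi,\varrho\ge0$; a process $S\in\mathcal L^2$ with $S_T\in L^2(\Omega,\mathcal F_T,\mathbb P)$; a process $g\in\mathcal L^2$; $\alpha_t=\mathbb E_t[S_T-S_t]$. For $u\in\mathcal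 L^2$ set $X^u_t=X_0+\int_0^tu_s\,ds$, $Z^u_t=g_t+(\mathbf Gu)_t$. The performance functional is $$\mathcal J(u)=\mathbb E\Big[\int_0^T\big(\alpha_t-\tfrac\gamma2u_t-h(Z^u_t)\big)u_t\,dt-\tfrac\phi2\int_0^T(X^u_t)^2dt-\tfrac\varrho2(X^u_T)^2\Big]+X_0\mathbb E[S_T].$$ *)

theory Defs
  imports "HOL-Probability.Probability"
begin

definition usual_filtration :: "'a measure \<Rightarrow> (real \<Rightarrow> 'a measure) \<Rightarrow> real \<Rightarrow> bool" where
  "usual_filtration M F T \<longleftrightarrow>
     (\<forall>t\<in>{0..T}. subalgebra M (F t)) \<and>
     (\<forall>s t. 0 \<le> s \<longrightarrow> s \<le> t \<longrightarrow> t \<le> T \<longrightarrow> sets (F s) \<subseteq> sets (F t)) \<and>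
     (\<forall>N. (\<exists>A\<in>sets M. N \<subseteq> A \<and> emeasure M A = 0) \<longrightarrow> N \<in> sets (F 0)) \<and>
     (\<forall>t\<in>{0..<T}. sets (F t) = (\<Inter>s\<in>{t<..T}. sets (F s)))"

definition progressive :: "(real \<Rightarrow> 'a measure) \<Rightarrow> real \<Rightarrow> (real \<Rightarrow> 'a \<Rightarrow> real) \<Rightarrow> bool" where
  "progressive F T f \<longleftrightarrow>
     (\<forall>t\<in>{0..T}. (\<lambda>(s, \<omega>). f s \<omega>) \<in> borel_measurable (restrict_space lborel {0..t} \<Otimes>\<^sub>M F t))"

definition L2proc :: "'a measure \<Rightarrow> (real \<Rightarrow> 'a measure) \<Rightarrow> real \<Rightarrow> (real \<Rightarrow> 'a \<Rightarrow> real) \<Rightarrow> bool" where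
  "L2proc M F T f \<longleftrightarrow> progressive F T f \<and>
     (\<integral>\<^sup>+\<omega>. (\<integral>\<^sup>+s\<in>{0..T}. ennreal ((f s \<omega>)\<^sup>2) \<partial>lborel) \<partial>M) < \<infinity>"

definition L2norm :: "'a measure \<Rightarrow> real \<Rightarrow> (real \<Rightarrow> 'a \<Rightarrow> real) \<Rightarrow> real" where
  "L2norm M T f = sqrt (enn2real (\<integral>\<^sup>+\<omega>. (\<integral>\<^sup>+s\<in>{0..T}. ennreal ((f s \<omega>)\<^sup>2) \<partial>lborel) \<partial>M))"

definition admissible_kernel :: "real \<Rightarrow> (real \<Rightarrow> real \<Rightarrow> real) \<Rightarrow> bool" where
  "admissible_kernel T G \<longleftrightarrow> (\<lambda>(t, s). G t s) \<in> borel_measurable borel \<and>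
     (\<exists>B. \<forall>t\<in>{0..T}. (\<integral>\<^sup>+s\<in>{0..t}. ennreal ((G t s)\<^sup>2) \<partial>lborel) \<le> ennreal B)"

definition volterra :: "(real \<Rightarrow> real \<Rightarrow> real) \<Rightarrow> (real \<Rightarrow> 'a \<Rightarrow> real) \<Rightarrow> real \<Rightarrow> 'a \<Rightarrow> real" where
  "volterra G u t \<omega> = (LINT s:{0..t}|lborel. G t s * u s \<omega>)"

definition inventory :: "real \<Rightarrow> (real \<Rightarrow> 'a \<Rightarrow> real) \<Rightarrow> real \<Rightarrow> 'a \<Rightarrow> real" where
  "inventory X0 u t \<omega> = X0 + (LINT s:{0..t}|lborel. u s \<omega>)"

definition perf :: "'a measure \<Rightarrow> real \<Rightarrow> real \<Rightarrow> real \<Rightarrow> real \<Rightarrow> real \<Rightarrow>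
    (real \<Rightarrow> 'a \<Rightarrow> real) \<Rightarrow> (real \<Rightarrow> real) \<Rightarrow> (real \<Rightarrow> real \<Rightarrow> real) \<Rightarrow>
    (real \<Rightarrow> 'a \<Rightarrow> real) \<Rightarrow> (real \<Rightarrow> 'a \<Rightarrow> real) \<Rightarrow> (real \<Rightarrow> 'a \<Rightarrow> real) \<Rightarrow> real" where
  "perf M T X0 \<gamma> \<phi> \<rho> S h G \<alpha> g u =
     (\<integral>\<omega>. (LINT t:{0..T}|lborel.
              (\<alpha> t \<omega> - \<gamma> / 2 * u t \<omega> - h (g t \<omega> + volterra G u t \<omega>)) * u t \<omega>)
           - \<phi> / 2 * (LINT t:{0..T}|lborel. (inventory X0 u t \<omega>)\<^sup>2)
           - \<rho> / 2 * (inventory X0 u T \<omega>)\<^sup>2 \<partial>M)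
     + X0 * (\<integral>\<omega>. S T \<omega> \<partial>M)"

end

theory Submission imports Defs begin

definition hat :: "(real \<Rightarrow> 'a \<Rightarrow> real) \<Rightarrow> 'a \<times> real \<Rightarrow> real" where
  "hat f = (\<lambda>(\<omega>,t). f t \<omega>)"
lemma hat_apply[simp]: "hat f (\<omega>, t) = f t \<omega>" by (simp add: hat_def)

lemma norm_integral_le_nn: "norm (integral\<^sup>L M f) \<le> (\<integral>\<^sup>+x. norm (f x) \<partial>M)"
  by (cases "integrable M f") (auto simp: integral_norm_bound_ennreal not_integrable_integral_eq)

lemma integrable_by_nn:
  fixes f :: "'b \<Rightarrow> real"
  assumes "f \<in> borel_measurable N" "\<And>x. x \<in> space N \<Longrightarrow> ennreal \<bar>f x\<bar> \<le> g x"
    "(\<integral>\<^sup>+x. g x \<partial>N) < \<infinity>"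
  shows "integrable N f"
proof (rule integrableI_bounded)
  show "f \<in> borel_measurable N" by fact
  have "(\<integral>\<^sup>+x. ennreal (norm (f x)) \<partial>N) \<le> (\<integral>\<^sup>+x. g x \<partial>N)"
    using assms(2) by (intro nn_integral_mono) auto
  then show "(\<integral>\<^sup>+x. ennreal (norm (f x)) \<partial>N) < \<infinity>" using assms(3) by (meson le_less_trans)
qed


lemma cs_int:
  fixes k v :: "'b \<Rightarrow> real"
  assumes [measurable]: "k \<in> borel_measurable N" "v \<in> borel_measurable N"
  shows "ennreal ((integral\<^sup>L N (\<lambda>s. k s * v s))\<^sup>2) \<le> (\<integral>\<^sup>+s. ennreal ((k s)\<^sup>2) \<partial>N) * (\<integral>\<^sup>+s. ennreal ((v s)\<^sup>2) \<partial>N)"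
proof -
  let ?I = "integral\<^sup>L N (\<lambda>s. k s * v s)"
  have "ennreal (?I\<^sup>2) = (ennreal \<bar>?I\<bar>)\<^sup>2" by (simp add: ennreal_power)
  also have "\<dots> \<le> (\<integral>\<^sup>+s. ennreal \<bar>k s\<bar> * ennreal \<bar>v s\<bar> \<partial>N)\<^sup>2"
  proof (rule power_mono)
    have "ennreal \<bar>?I\<bar> \<le> (\<integral>\<^sup>+s. norm (k s * v s) \<partial>N)" using norm_integral_le_nn[of N "\<lambda>s. k s * v s"] by simp
    also have "\<dots> = (\<integral>\<^sup>+s. ennreal \<bar>k s\<bar> * ennreal \<bar>v s\<bar> \<partial>N)"
      by (simp add: abs_mult ennreal_mult)
    finally show "ennreal \<bar>?I\<bar> \<le> (\<integral>\<^sup>+s. ennreal \<bar>k s\<bar> * ennreal \<bar>v s\<bar> \<partial>N)" .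
  qed simp
  also have "\<dots> \<le> (\<integral>\<^sup>+s. (ennreal \<bar>k s\<bar>)^2 \<partial>N) * (\<integral>\<^sup>+s. (ennreal \<bar>v s\<bar>)^2 \<partial>N)"
    by (rule Cauchy_Schwarz_nn_integral) measurable
  also have "\<dots> = (\<integral>\<^sup>+s. ennreal ((k s)\<^sup>2) \<partial>N) * (\<integral>\<^sup>+s. ennreal ((v s)\<^sup>2) \<partial>N)"
    by (simp add: ennreal_power)
  finally show ?thesis .
qed

lemma young: assumes "c > 0" shows "x * y \<le> x\<^sup>2 / (2*c) + c * y\<^sup>2 / (2::real)"
proof -
  have "0 \<le> (x - c*y)\<^sup>2 / (2*c)" using assms by simp
  also have "(x - c*y)\<^sup>2 / (2*c) = x\<^sup>2 / (2*c) + c * y\<^sup>2 / 2 - x * y"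
    using assms by (simp add: power2_eq_square field_simps)
  finally show ?thesis by simp
qed

lemma powr_small:
  fixes x \<eta> \<zeta> :: real
  assumes x: "0 \<le> x" and e: "\<eta> > 0" and z: "0 < \<zeta>" "\<zeta> < 1"
  shows "x powr (2*\<zeta>) \<le> \<eta> * x\<^sup>2 + (1/\<eta>) powr (\<zeta>/(1-\<zeta>))"
proof (cases "x = 0")
  case True then show ?thesis by simp
next
  case False
  then have xp: "x > 0" using x by simp
  define x0 where "x0 = (1/\<eta>) powr (1/(2-2*\<zeta>))"
  have x0p: "x0 > 0" unfolding x0_def using e by simp
  show ?thesis
  proof (cases "x \<le> x0")
    case True
    have "x powr (2*\<zeta>) \<le> x0 powr (2*\<zeta>)" using True xp z by (intro powr_mono2) auto
    also have "\<dots> = (1/\<eta>) powr (\<zeta>/(1-\<zeta>))"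
    proof -
      have "1/(2-2*\<zeta>) * (2*\<zeta>) = \<zeta>/(1-\<zeta>)" using z by (simp add: field_simps)
      then show ?thesis unfolding x0_def by (simp add: powr_powr)
    qed
    finally show ?thesis using e by (smt (verit) mult_nonneg_nonneg zero_le_power2)
  next
    case False
    then have "x0 powr (2-2*\<zeta>) \<le> x powr (2-2*\<zeta>)" using x0p z by (intro powr_mono2) auto
    moreover have "x0 powr (2-2*\<zeta>) = 1/\<eta>"
      unfolding x0_def using e z by (simp add: powr_powr)
    ultimately have le: "1/\<eta> \<le> x powr (2-2*\<zeta>)" by simp
    have "x\<^sup>2 = x powr (2*\<zeta>) * x powr (2-2*\<zeta>)"
      using xp by (simp add: powr_add[symmetric] powr_numeral)
    also have "\<dots> \<ge> x powr (2*\<zeta>) * (1/\<eta>)" using le by (intro mult_left_mono) auto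
    finally have "x powr (2*\<zeta>) \<le> \<eta> * x\<^sup>2" using e by (simp add: field_simps)
    moreover have "0 \<le> (1/\<eta>) powr (\<zeta>/(1-\<zeta>))" by simp
    ultimately show ?thesis by linarith
  qed
qed

locale mt = prob_space M for M :: "'a measure" +
  fixes F :: "real \<Rightarrow> 'a measure" and T :: real
  assumes T_pos: "T > 0" and subT: "subalgebra M (F T)"
begin

definition Lam :: "real measure" where "Lam = restrict_space lborel {0..T}"

lemma space_Lam[simp]: "space Lam = {0..T}" by (simp add: Lam_def)
lemma sets_Lam_sub: "A \<in> sets Lam \<Longrightarrow> A \<in> sets lborel" unfolding Lam_def
  by (simp add: sets_restrict_space_iff)
lemma Lam_finite: "finite_measure Lam" unfolding Lam_def
  by (intro finite_measureI) (simp add: emeasure_restrict_space emeasure_lborel_Icc_eq)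
lemma emeasure_Lam: "emeasure Lam (space Lam) = ennreal T"
  unfolding Lam_def using T_pos by (simp add: emeasure_restrict_space)

sublocale L: finite_measure Lam by (rule Lam_finite)
sublocale PS: pair_sigma_finite M Lam by unfold_locales
sublocale PF: finite_measure "M \<Otimes>\<^sub>M Lam" 
  by (rule finite_measure_pair_measure) (unfold_locales)

abbreviation "P \<equiv> M \<Otimes>\<^sub>M Lam"

lemma Lam_id_meas: "(\<lambda>x::real. x) \<in> borel_measurable Lam"
  unfolding Lam_def by (rule measurable_restrict_space1) simp

lemma sets_Lam_eq: "sets Lam = sets (restrict_space lborel {0..T})" by (simp add: Lam_def)

lemma prog_meas:
  assumes "progressive F T f"
  shows "hat f \<in> borel_measurable P"
proof -
  have f1: "(\<lambda>(s, \<omega>). f s \<omega>) \<in> borel_measurable (Lam \<Otimes>\<^sub>M F T)"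
    using assms T_pos unfolding progressive_def Lam_def by auto
  have fstm: "fst \<in> measurable P (F T)"
    using measurable_mono[of "F T" M P P] subT measurable_fst[of M Lam]
    unfolding subalgebra_def by auto
  have "(\<lambda>(\<omega>,t). (t,\<omega>)) \<in> measurable P (Lam \<Otimes>\<^sub>M F T)"
    using measurable_Pair[OF measurable_snd fstm] by (simp add: case_prod_beta')
  from measurable_comp[OF this f1] show ?thesis
    unfolding hat_def by (simp add: comp_def case_prod_beta')
qed

lemma L2_meas: "L2proc M F T f \<Longrightarrow> hat f \<in> borel_measurable P"
  unfolding L2proc_def by (auto intro: prog_meas)

lemma nn_Lam: "(\<integral>\<^sup>+s\<in>{0..T}. g s \<partial>lborel) = (\<integral>\<^sup>+s. g s \<partial>Lam)"
  unfolding Lam_def by (subst nn_integral_restrict_space) auto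

lemma Q_eq:
  assumes "hat f \<in> borel_measurable P"
  shows "(\<integral>\<^sup>+\<omega>. (\<integral>\<^sup>+s\<in>{0..T}. ennreal ((f s \<omega>)\<^sup>2) \<partial>lborel) \<partial>M)
     = (\<integral>\<^sup>+p. ennreal ((hat f p)\<^sup>2) \<partial>P)"
proof -
  have m: "(\<lambda>p. ennreal ((hat f p)\<^sup>2)) \<in> borel_measurable P" using assms by measurable
  show ?thesis unfolding nn_Lam
    using L.nn_integral_fst[OF m] by (simp add: hat_def)
qed

definition L2P :: "('a \<times> real \<Rightarrow> real) \<Rightarrow> bool" where
  "L2P f \<longleftrightarrow> f \<in> borel_measurable P \<and> integrable P (\<lambda>p. (f p)\<^sup>2)"

lemma L2P_hat: assumes "L2proc M F T f" shows "L2P (hat f)"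
proof -
  have m: "hat f \<in> borel_measurable P" using L2_meas[OF assms] .
  have "(\<integral>\<^sup>+p. ennreal ((hat f p)\<^sup>2) \<partial>P) < \<infinity>"
    using assms Q_eq[OF m] unfolding L2proc_def by simp
  then show ?thesis unfolding L2P_def using m
    by (intro conjI integrableI_bounded) auto
qed

lemma L2P_int: "L2P f \<Longrightarrow> integrable P f"
  unfolding L2P_def by (auto intro: PF.square_integrable_imp_integrable)

lemma abs_mult_le_sq: "\<bar>a * b\<bar> \<le> a\<^sup>2 + (b::real)\<^sup>2"
proof -
  have "0 \<le> (\<bar>a\<bar> - \<bar>b\<bar>)\<^sup>2" by simp
  then have "2 * \<bar>a\<bar> * \<bar>b\<bar> \<le> a\<^sup>2 + b\<^sup>2" by (simp add: power2_eq_square algebra_simps)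
  moreover have "\<bar>a * b\<bar> = \<bar>a\<bar> * \<bar>b\<bar>" by (rule abs_mult)
  moreover have "0 \<le> \<bar>a\<bar> * \<bar>b\<bar>" by simp
  ultimately show ?thesis by linarith
qed

lemma sq_add_le: "(a + b)\<^sup>2 \<le> 2*a\<^sup>2 + 2*(b::real)\<^sup>2"
proof -
  have "0 \<le> (a - b)\<^sup>2" by simp
  then show ?thesis by (simp add: power2_eq_square algebra_simps)
qed

lemma L2P_mult: assumes "L2P f" "L2P g" shows "integrable P (\<lambda>p. f p * g p)"
proof -
  have i: "integrable P (\<lambda>p. (f p)\<^sup>2 + (g p)\<^sup>2)" using assms unfolding L2P_def by auto
  have m: "(\<lambda>p. f p * g p) \<in> borel_measurable P" using assms unfolding L2P_def by (intro borel_measurable_times) auto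
  have a: "AE x in P. norm (f x * g x) \<le> norm ((f x)\<^sup>2 + (g x)\<^sup>2)"
    using abs_mult_le_sq by (intro AE_I2) simp
  show ?thesis by (rule Bochner_Integration.integrable_bound[OF i m a])
qed

lemma L2P_bound: assumes "L2P g" "f \<in> borel_measurable P" "\<And>p. p \<in> space P \<Longrightarrow> (f p)\<^sup>2 \<le> c * (g p)\<^sup>2 + d"
  shows "L2P f"
proof -
  have i: "integrable P (\<lambda>p. c * (g p)\<^sup>2 + d)" using assms(1) unfolding L2P_def by auto
  have m: "(\<lambda>p. (f p)\<^sup>2) \<in> borel_measurable P" using assms(2) by measurable
  have a: "AE x in P. norm ((f x)\<^sup>2) \<le> norm (c * (g x)\<^sup>2 + d)"
    using assms(3) by (intro AE_I2) (smt (verit) real_norm_def zero_le_power2)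
  show ?thesis unfolding L2P_def using Bochner_Integration.integrable_bound[OF i m a] assms(2) by simp
qed

lemma L2P_add: assumes "L2P f" "L2P g" shows "L2P (\<lambda>p. f p + g p)"
proof -
  have i: "integrable P (\<lambda>p. 2*(f p)\<^sup>2 + 2*(g p)\<^sup>2)" using assms unfolding L2P_def by auto
  have m: "(\<lambda>p. (f p + g p)\<^sup>2) \<in> borel_measurable P" using assms unfolding L2P_def by (intro borel_measurable_power borel_measurable_add) auto
  have a: "AE x in P. norm ((f x + g x)\<^sup>2) \<le> norm (2*(f x)\<^sup>2 + 2*(g x)\<^sup>2)"
    using sq_add_le by (intro AE_I2) simp
  have m2: "(\<lambda>p. f p + g p) \<in> borel_measurable P" using assms unfolding L2P_def by (intro borel_measurable_add) auto
  show ?thesis unfolding L2P_def using Bochner_Integration.integrable_bound[OF i m a] m2 by simp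
qed

lemma L2P_scale: assumes "L2P f" shows "L2P (\<lambda>p. c * f p)"
  using assms unfolding L2P_def by (auto simp: power_mult_distrib)

lemma L2P_diff: assumes "L2P f" "L2P g" shows "L2P (\<lambda>p. f p - g p)"
  using L2P_add[OF assms(1) L2P_scale[OF assms(2), of "-1"]] by simp

lemma L2P_const: "L2P (\<lambda>p. c)"
  unfolding L2P_def by auto


lemma set_int_Lam:
  fixes f :: "real \<Rightarrow> real"
  assumes "0 \<le> t" "t \<le> T"
  shows "(LINT s:{0..t}|lborel. f s) = integral\<^sup>L Lam (\<lambda>s. indicator {0..t} s * f s)"
proof -
  have "integral\<^sup>L Lam (\<lambda>s. indicator {0..t} s * f s)
     = integral\<^sup>L lborel (\<lambda>s. indicator {0..T} s *\<^sub>R (indicator {0..t} s * f s))"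
    unfolding Lam_def by (subst Bochner_Integration.integral_restrict_space) auto
  also have "\<dots> = integral\<^sup>L lborel (\<lambda>s. indicator {0..t} s *\<^sub>R f s)"
    using assms by (intro Bochner_Integration.integral_cong) (auto simp: indicator_def)
  finally show ?thesis unfolding set_lebesgue_integral_def by simp
qed

lemma set_int_Lam_T: "(LINT s:{0..T}|lborel. (f::real\<Rightarrow>real) s) = integral\<^sup>L Lam f"
proof -
  have "integral\<^sup>L Lam f = integral\<^sup>L lborel (\<lambda>s. indicator {0..T} s *\<^sub>R f s)"
    unfolding Lam_def by (subst Bochner_Integration.integral_restrict_space) auto
  then show ?thesis unfolding set_lebesgue_integral_def by simp
qed

lemma meas_fst_snd[measurable]: "(\<lambda>x. snd (fst x)) \<in> borel_measurable ((P) \<Otimes>\<^sub>M Lam)"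
  using measurable_compose[OF measurable_compose[OF measurable_fst[of P Lam] measurable_snd[of M Lam]] Lam_id_meas] by simp
lemma meas_snd2[measurable]: "(\<lambda>x. snd x) \<in> borel_measurable ((P) \<Otimes>\<^sub>M Lam)"
  using measurable_compose[OF measurable_snd[of P Lam] Lam_id_meas] by simp

lemma meas_kernel_u:
  assumes um: "hat u \<in> borel_measurable P" and Gm: "(\<lambda>(t, s). G t s) \<in> borel_measurable borel"
  shows "(\<lambda>x. indicator {0..snd (fst x)} (snd x) * (G (snd (fst x)) (snd x) * u (snd x) (fst (fst x))))
      \<in> borel_measurable (P \<Otimes>\<^sub>M Lam)"
proof -
  have a: "(\<lambda>x. u (snd x) (fst (fst x))) \<in> borel_measurable (P \<Otimes>\<^sub>M Lam)"
  proof -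
    have "(\<lambda>x. (fst (fst x), snd x)) \<in> measurable (P \<Otimes>\<^sub>M Lam) P" by measurable
    from measurable_comp[OF this um] show ?thesis by (simp add: comp_def)
  qed
  have b: "(\<lambda>x. G (snd (fst x)) (snd x)) \<in> borel_measurable (P \<Otimes>\<^sub>M Lam)"
  proof -
    have "(\<lambda>x. (snd (fst x), snd x)) \<in> borel_measurable (P \<Otimes>\<^sub>M Lam)"
      by (intro borel_measurable_Pair) measurable
    from measurable_comp[OF this Gm] show ?thesis by (simp add: comp_def)
  qed
  have c: "(\<lambda>x. indicator {0..snd (fst x)} (snd x) :: real) \<in> borel_measurable (P \<Otimes>\<^sub>M Lam)"
  proof -
    have "{x \<in> space (P \<Otimes>\<^sub>M Lam). 0 \<le> snd x \<and> snd x \<le> snd (fst x)} \<in> sets (P \<Otimes>\<^sub>M Lam)"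
      by measurable
    then have "(\<lambda>x. indicator {x \<in> space (P \<Otimes>\<^sub>M Lam). 0 \<le> snd x \<and> snd x \<le> snd (fst x)} x :: real) \<in> borel_measurable (P \<Otimes>\<^sub>M Lam)"
      by (rule borel_measurable_indicator)
    then show ?thesis by (rule measurable_cong[THEN iffD1, rotated]) (auto simp: indicator_def)
  qed
  show ?thesis using a b c by measurable
qed

lemma volterra_Lam:
  assumes "0 \<le> t" "t \<le> T"
  shows "volterra G u t \<omega> = integral\<^sup>L Lam (\<lambda>s. indicator {0..t} s * (G t s * u s \<omega>))"
  unfolding volterra_def using set_int_Lam[OF assms] .

lemma inventory_Lam:
  assumes "0 \<le> t" "t \<le> T"
  shows "inventory X0 u t \<omega> = X0 + integral\<^sup>L Lam (\<lambda>s. indicator {0..t} s * (1 * u s \<omega>))"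
  unfolding inventory_def using set_int_Lam[OF assms] by simp

lemma volterra_meas:
  assumes um: "hat u \<in> borel_measurable P" and Gm: "(\<lambda>(t, s). G t s) \<in> borel_measurable borel"
  shows "hat (volterra G u) \<in> borel_measurable P"
proof -
  have "(\<lambda>p. integral\<^sup>L Lam (\<lambda>s. indicator {0..snd p} s * (G (snd p) s * u s (fst p)))) \<in> borel_measurable P"
    using L.borel_measurable_lebesgue_integral[of "\<lambda>p s. indicator {0..snd p} s * (G (snd p) s * u s (fst p))" P]
      meas_kernel_u[OF um Gm] by (simp add: case_prod_beta')
  then show ?thesis
    by (rule measurable_cong[THEN iffD1, rotated]) (auto simp: space_pair_measure volterra_Lam hat_def)
qed

lemma inventory_meas:
  assumes um: "hat u \<in> borel_measurable P"
  shows "hat (inventory X0 u) \<in> borel_measurable P"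
proof -
  have Gm: "(\<lambda>(t, s). (\<lambda>t s. 1::real) t s) \<in> borel_measurable borel" by simp
  have "(\<lambda>p. X0 + integral\<^sup>L Lam (\<lambda>s. indicator {0..snd p} s * (1 * u s (fst p)))) \<in> borel_measurable P"
    using L.borel_measurable_lebesgue_integral[of "\<lambda>p s. indicator {0..snd p} s * (1 * u s (fst p))" P]
      meas_kernel_u[OF um Gm] by (simp add: case_prod_beta')
  then show ?thesis
    by (rule measurable_cong[THEN iffD1, rotated]) (auto simp: space_pair_measure inventory_Lam hat_def)
qed


definition Yu :: "(real \<Rightarrow> 'a \<Rightarrow> real) \<Rightarrow> 'a \<Rightarrow> ennreal" where
  "Yu u \<omega> = (\<integral>\<^sup>+s. ennreal ((u s \<omega>)\<^sup>2) \<partial>Lam)"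

lemma kernel_bound:
  assumes um: "hat u \<in> borel_measurable P" and Km: "(\<lambda>(t, s). K t s) \<in> borel_measurable borel"
    and \<omega>: "\<omega> \<in> space M" and t: "0 \<le> t" "t \<le> T"
    and KB: "(\<integral>\<^sup>+s\<in>{0..t}. ennreal ((K t s)\<^sup>2) \<partial>lborel) \<le> ennreal B"
  shows "ennreal ((integral\<^sup>L Lam (\<lambda>s. indicator {0..t} s * (K t s * u s \<omega>)))\<^sup>2) \<le> ennreal B * Yu u \<omega>"
proof -
  have km: "(\<lambda>s. indicator {0..t} s * K t s) \<in> borel_measurable Lam"
  proof -
    have "(\<lambda>s. (t, s)) \<in> borel_measurable Lam"
      using Lam_id_meas by (intro borel_measurable_Pair) auto
    from measurable_comp[OF this Km] have "(\<lambda>s. K t s) \<in> borel_measurable Lam" by (simp add: comp_def)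
    moreover have "(\<lambda>s. indicator {0..t} s :: real) \<in> borel_measurable Lam"
      using measurable_comp[OF Lam_id_meas borel_measurable_indicator[of "{0..t}" borel]] by (simp add: comp_def)
    ultimately show ?thesis by (intro borel_measurable_times)
  qed
  have vm: "(\<lambda>s. u s \<omega>) \<in> borel_measurable Lam"
    using measurable_Pair2[OF um \<omega>] by simp
  have "ennreal ((integral\<^sup>L Lam (\<lambda>s. indicator {0..t} s * (K t s * u s \<omega>)))\<^sup>2)
      = ennreal ((integral\<^sup>L Lam (\<lambda>s. (indicator {0..t} s * K t s) * u s \<omega>))\<^sup>2)"
    by (simp add: mult.assoc)
  also have "\<dots> \<le> (\<integral>\<^sup>+s. ennreal ((indicator {0..t} s * K t s)\<^sup>2) \<partial>Lam) * (\<integral>\<^sup>+s. ennreal ((u s \<omega>)\<^sup>2) \<partial>Lam)"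
    by (rule cs_int[OF km vm])
  also have "(\<integral>\<^sup>+s. ennreal ((indicator {0..t} s * K t s)\<^sup>2) \<partial>Lam) = (\<integral>\<^sup>+s\<in>{0..t}. ennreal ((K t s)\<^sup>2) \<partial>lborel)"
  proof -
    have "(\<integral>\<^sup>+s. ennreal ((indicator {0..t} s * K t s)\<^sup>2) \<partial>Lam)
        = (\<integral>\<^sup>+s\<in>{0..T}. ennreal ((indicator {0..t} s * K t s)\<^sup>2) \<partial>lborel)" by (rule nn_Lam[symmetric])
    also have "\<dots> = (\<integral>\<^sup>+s\<in>{0..t}. ennreal ((K t s)\<^sup>2) \<partial>lborel)"
      using t by (intro nn_integral_cong) (auto simp: indicator_def)
    finally show ?thesis .
  qed
  finally show ?thesis unfolding Yu_def using KB
    by (meson dual_order.trans mult_right_mono zero_le)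
qed

lemma Yu_meas: "hat u \<in> borel_measurable P \<Longrightarrow> Yu u \<in> borel_measurable M"
proof -
  assume a: "hat u \<in> borel_measurable P"
  have "(\<lambda>p. ennreal ((hat u p)\<^sup>2)) \<in> borel_measurable P" using a by measurable
  from L.borel_measurable_nn_integral_fst[OF this] show ?thesis
    unfolding Yu_def by (simp add: hat_def)
qed

lemma Yu_int:
  assumes "L2P (hat u)"
  shows "(\<integral>\<^sup>+\<omega>. Yu u \<omega> \<partial>M) = ennreal (integral\<^sup>L P (\<lambda>p. (hat u p)\<^sup>2))"
proof -
  have um: "hat u \<in> borel_measurable P" using assms unfolding L2P_def by simp
  have m: "(\<lambda>p. ennreal ((hat u p)\<^sup>2)) \<in> borel_measurable P" using um by measurable
  have "(\<integral>\<^sup>+\<omega>. Yu u \<omega> \<partial>M) = (\<integral>\<^sup>+p. ennreal ((hat u p)\<^sup>2) \<partial>P)"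
    unfolding Yu_def using L.nn_integral_fst[OF m] by (simp add: hat_def)
  also have "\<dots> = ennreal (integral\<^sup>L P (\<lambda>p. (hat u p)\<^sup>2))"
    using assms unfolding L2P_def by (intro nn_integral_eq_integral) auto
  finally show ?thesis .
qed

lemma kernel_L2P:
  assumes u: "L2P (hat u)" and Wm: "hat W \<in> borel_measurable P" and c: "0 \<le> c"
    and WB: "\<And>\<omega> t. \<omega> \<in> space M \<Longrightarrow> 0 \<le> t \<Longrightarrow> t \<le> T \<Longrightarrow> ennreal ((W t \<omega>)\<^sup>2) \<le> ennreal c * Yu u \<omega>"
  shows "L2P (hat W)" "integral\<^sup>L P (\<lambda>p. (hat W p)\<^sup>2) \<le> c * T * integral\<^sup>L P (\<lambda>p. (hat u p)\<^sup>2)"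
proof -
  have um: "hat u \<in> borel_measurable P" using u unfolding L2P_def by simp
  note Ym = Yu_meas[OF um]
  have "(\<integral>\<^sup>+p. ennreal ((hat W p)\<^sup>2) \<partial>P) \<le> (\<integral>\<^sup>+p. ennreal c * Yu u (fst p) \<partial>P)"
    using WB by (intro nn_integral_mono) (auto simp: space_pair_measure hat_def)
  also have "\<dots> = (\<integral>\<^sup>+\<omega>. (\<integral>\<^sup>+t. ennreal c * Yu u \<omega> \<partial>Lam) \<partial>M)"
  proof -
    have "(\<lambda>p. ennreal c * Yu u (fst p)) \<in> borel_measurable P" using Ym by measurable
    from L.nn_integral_fst[OF this] show ?thesis by simp
  qed
  also have "\<dots> = (\<integral>\<^sup>+\<omega>. ennreal (c * T) * Yu u \<omega> \<partial>M)"
    using T_pos c emeasure_Lam by (intro nn_integral_cong) (simp add: ennreal_mult mult_ac)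
  also have "\<dots> = ennreal (c * T) * ennreal (integral\<^sup>L P (\<lambda>p. (hat u p)\<^sup>2))"
    using Ym Yu_int[OF u] by (simp add: nn_integral_cmult)
  also have "\<dots> = ennreal (c * T * integral\<^sup>L P (\<lambda>p. (hat u p)\<^sup>2))"
    using c T_pos by (simp add: ennreal_mult)
  finally have nb: "(\<integral>\<^sup>+p. ennreal ((hat W p)\<^sup>2) \<partial>P) \<le> ennreal (c * T * integral\<^sup>L P (\<lambda>p. (hat u p)\<^sup>2))" .
  have m2: "(\<lambda>p. (hat W p)\<^sup>2) \<in> borel_measurable P" using Wm by measurable
  have "integrable P (\<lambda>p. (hat W p)\<^sup>2)"
    by (rule integrable_by_nn[OF m2 _ le_less_trans[OF nb]]) auto
  then show "L2P (hat W)" unfolding L2P_def using Wm by simp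
  have "integral\<^sup>L P (\<lambda>p. (hat W p)\<^sup>2) = enn2real (\<integral>\<^sup>+p. ennreal ((hat W p)\<^sup>2) \<partial>P)"
    by (rule integral_eq_nn_integral[OF m2]) auto
  also have "\<dots> \<le> enn2real (ennreal (c * T * integral\<^sup>L P (\<lambda>p. (hat u p)\<^sup>2)))"
    by (rule enn2real_mono[OF nb]) simp
  also have "\<dots> = c * T * integral\<^sup>L P (\<lambda>p. (hat u p)\<^sup>2)"
    using c T_pos by (intro enn2real_ennreal mult_nonneg_nonneg integral_nonneg_AE) auto
  finally show "integral\<^sup>L P (\<lambda>p. (hat W p)\<^sup>2) \<le> c * T * integral\<^sup>L P (\<lambda>p. (hat u p)\<^sup>2)" .
qed

end

locale mt2 = mt M F T for M :: "'a measure" and F T +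
  fixes G :: "real \<Rightarrow> real \<Rightarrow> real" and h :: "real \<Rightarrow> real" and L B X0 \<gamma> \<phi> \<rho> :: real
    and S :: "real \<Rightarrow> 'a \<Rightarrow> real"
  assumes Gm: "(\<lambda>(t, s). G t s) \<in> borel_measurable borel"
    and GB: "\<And>t. 0 \<le> t \<Longrightarrow> t \<le> T \<Longrightarrow> (\<integral>\<^sup>+s\<in>{0..t}. ennreal ((G t s)\<^sup>2) \<partial>lborel) \<le> ennreal B"
    and B_pos: "B > 0"
    and hL: "L-lipschitz_on UNIV h"
    and \<gamma>_pos: "\<gamma> > 0" and \<phi>_nn: "\<phi> \<ge> 0" and \<rho>_nn: "\<rho> \<ge> 0"
begin

lemma L_nn: "L \<ge> 0" using hL lipschitz_on_nonneg by blast

lemma h_meas[measurable]: "h \<in> borel_measurable borel"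
  using lipschitz_on_continuous_on[OF hL] by (rule borel_measurable_continuous_onI)

lemma h_lip: "\<bar>h x - h y\<bar> \<le> L * \<bar>x - y\<bar>"
  using lipschitz_onD[OF hL] by (simp add: dist_real_def)

lemma h_lin: "(h x)\<^sup>2 \<le> 2 * (h 0)\<^sup>2 + 2 * L\<^sup>2 * x\<^sup>2"
proof -
  have "\<bar>h x\<bar> \<le> \<bar>h 0\<bar> + L * \<bar>x\<bar>" using h_lip[of x 0] by simp
  then have "(h x)\<^sup>2 \<le> (\<bar>h 0\<bar> + L * \<bar>x\<bar>)\<^sup>2"
    by (metis abs_ge_zero power2_abs power_mono)
  also have "\<dots> \<le> 2 * \<bar>h 0\<bar>\<^sup>2 + 2 * (L * \<bar>x\<bar>)\<^sup>2" by (rule sq_add_le)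
  finally show ?thesis by (simp add: power_mult_distrib)
qed

lemma volt_bound:
  assumes "hat u \<in> borel_measurable P" "\<omega> \<in> space M" "0 \<le> t" "t \<le> T"
  shows "ennreal ((volterra G u t \<omega>)\<^sup>2) \<le> ennreal B * Yu u \<omega>"
  using kernel_bound[OF assms(1) Gm assms(2-4) GB[OF assms(3,4)]] by (simp add: volterra_Lam[OF assms(3,4)])

lemma inv_bound:
  assumes "hat u \<in> borel_measurable P" "\<omega> \<in> space M" "0 \<le> t" "t \<le> T"
  shows "ennreal ((inventory X0 u t \<omega> - X0)\<^sup>2) \<le> ennreal T * Yu u \<omega>"
proof -
  have Km: "(\<lambda>(t, s). (\<lambda>t s. 1::real) t s) \<in> borel_measurable borel" by simp
  have "(\<integral>\<^sup>+s\<in>{0..t}. ennreal ((1::real)\<^sup>2) \<partial>lborel) = ennreal t"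
    using assms by (simp add: emeasure_lborel_Icc_eq)
  also have "\<dots> \<le> ennreal T" using assms by simp
  finally have "(\<integral>\<^sup>+s\<in>{0..t}. ennreal (((\<lambda>t s. 1::real) t s)\<^sup>2) \<partial>lborel) \<le> ennreal T" by simp
  from kernel_bound[OF assms(1) Km assms(2-4) this] show ?thesis by (simp add: inventory_Lam[OF assms(3,4)])
qed

lemma volt_L2P:
  assumes "L2P (hat u)"
  shows "L2P (hat (volterra G u))"
    "integral\<^sup>L P (\<lambda>p. (hat (volterra G u) p)\<^sup>2) \<le> B * T * integral\<^sup>L P (\<lambda>p. (hat u p)\<^sup>2)"
proof -
  have um: "hat u \<in> borel_measurable P" using assms unfolding L2P_def by simp
  note k = kernel_L2P[OF assms volterra_meas[OF um Gm], of B]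
  show "L2P (hat (volterra G u))" using k(1) B_pos volt_bound[OF um] by auto
  show "integral\<^sup>L P (\<lambda>p. (hat (volterra G u) p)\<^sup>2) \<le> B * T * integral\<^sup>L P (\<lambda>p. (hat u p)\<^sup>2)"
    using k(2) B_pos volt_bound[OF um] by auto
qed

lemma inv_L2P:
  assumes "L2P (hat u)"
  shows "L2P (hat (inventory X0 u))"
proof -
  have um: "hat u \<in> borel_measurable P" using assms unfolding L2P_def by simp
  have m: "hat (\<lambda>t \<omega>. inventory X0 u t \<omega> - X0) \<in> borel_measurable P"
    using inventory_meas[OF um, of X0] unfolding hat_def by (simp add: case_prod_beta')
  have "L2P (hat (\<lambda>t \<omega>. inventory X0 u t \<omega> - X0))"
    using kernel_L2P(1)[OF assms m, of T] T_pos inv_bound[OF um] by auto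
  from L2P_add[OF this L2P_const[of X0]] show ?thesis
    by (simp add: hat_def case_prod_beta')
qed

definition Af where
  "Af a g u = (\<lambda>p. (hat a p - \<gamma> / 2 * hat u p - h (hat g p + hat (volterra G u) p)) * hat u p)"

lemma hZ_L2P:
  assumes "L2P (hat g)" "L2P (hat u)"
  shows "L2P (\<lambda>p. h (hat g p + hat (volterra G u) p))"
proof -
  have z: "L2P (\<lambda>p. hat g p + hat (volterra G u) p)" using L2P_add[OF assms(1) volt_L2P(1)[OF assms(2)]] .
  have zm: "(\<lambda>p. hat g p + hat (volterra G u) p) \<in> borel_measurable P" using z unfolding L2P_def by simp
  have m: "(\<lambda>p. h (hat g p + hat (volterra G u) p)) \<in> borel_measurable P"
    using measurable_comp[OF zm h_meas] by (simp add: comp_def)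
  show ?thesis
  proof (rule L2P_bound[OF z m, where c="2*L^2" and d="2*(h 0)^2"])
    fix p show "(h (hat g p + hat (volterra G u) p))\<^sup>2 \<le> 2*L^2 * (hat g p + hat (volterra G u) p)\<^sup>2 + 2*(h 0)^2"
      using h_lin[of "hat g p + hat (volterra G u) p"] by linarith
  qed
qed

lemma Af_int:
  assumes "L2P (hat a)" "L2P (hat g)" "L2P (hat u)"
  shows "integrable P (Af a g u)"
proof -
  have "integrable P (\<lambda>p. hat a p * hat u p - \<gamma> / 2 * (hat u p * hat u p) - h (hat g p + hat (volterra G u) p) * hat u p)"
    using L2P_mult[OF assms(1,3)] L2P_mult[OF assms(3,3)] L2P_mult[OF hZ_L2P[OF assms(2,3)] assms(3)]
    by auto
  then show ?thesis unfolding Af_def by (simp add: algebra_simps)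
qed


definition Wt where
  "Wt u = (\<integral>\<omega>. (- (\<phi> / 2 * (LINT t:{0..T}|lborel. (inventory X0 u t \<omega>)\<^sup>2))
           - \<rho> / 2 * (inventory X0 u T \<omega>)\<^sup>2) \<partial>M) + X0 * (\<integral>\<omega>. S T \<omega> \<partial>M)"

lemma XT_int:
  assumes "L2P (hat u)"
  shows "integrable M (\<lambda>\<omega>. (inventory X0 u T \<omega>)\<^sup>2)"
proof -
  have um: "hat u \<in> borel_measurable P" using assms unfolding L2P_def by simp
  have "(\<lambda>\<omega>. hat (inventory X0 u) (\<omega>, T)) \<in> borel_measurable M"
    using measurable_Pair1[OF inventory_meas[OF um], of T X0] T_pos by simp
  then have m: "(\<lambda>\<omega>. (inventory X0 u T \<omega>)\<^sup>2) \<in> borel_measurable M" by simp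
  note Ym = Yu_meas[OF um]
  show ?thesis
  proof (rule integrable_by_nn[OF m])
    fix \<omega> assume w: "\<omega> \<in> space M"
    have "ennreal \<bar>(inventory X0 u T \<omega>)\<^sup>2\<bar> \<le> ennreal (2 * X0\<^sup>2 + 2 * (inventory X0 u T \<omega> - X0)\<^sup>2)"
      using sq_add_le[of X0 "inventory X0 u T \<omega> - X0"] by (intro ennreal_leI) simp
    also have "\<dots> = ennreal (2 * X0\<^sup>2) + 2 * ennreal ((inventory X0 u T \<omega> - X0)\<^sup>2)"
      by (simp add: ennreal_plus[symmetric] ennreal_mult)
    also have "\<dots> \<le> ennreal (2 * X0\<^sup>2) + 2 * (ennreal T * Yu u \<omega>)"
      using inv_bound[OF um w, of T] T_pos by (intro add_left_mono mult_left_mono) auto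
    finally show "ennreal \<bar>(inventory X0 u T \<omega>)\<^sup>2\<bar> \<le> ennreal (2 * X0\<^sup>2) + 2 * (ennreal T * Yu u \<omega>)" .
  next
    have "(\<integral>\<^sup>+\<omega>. ennreal (2 * X0\<^sup>2) + 2 * (ennreal T * Yu u \<omega>) \<partial>M)
        = ennreal (2 * X0\<^sup>2) + 2 * (ennreal T * ennreal (integral\<^sup>L P (\<lambda>p. (hat u p)\<^sup>2)))"
      using Ym Yu_int[OF assms] by (simp add: nn_integral_add nn_integral_cmult emeasure_space_1)
    also have "\<dots> < \<infinity>" by (simp add: ennreal_mult_less_top)
    finally show "(\<integral>\<^sup>+\<omega>. ennreal (2 * X0\<^sup>2) + 2 * (ennreal T * Yu u \<omega>) \<partial>M) < \<infinity>" .
  qed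
qed

lemma I_int:
  assumes "L2P (hat u)"
  shows "integrable M (\<lambda>\<omega>. LINT t:{0..T}|lborel. (inventory X0 u t \<omega>)\<^sup>2)"
proof -
  have "integrable P (\<lambda>p. (hat (inventory X0 u) p)\<^sup>2)" using inv_L2P[OF assms] unfolding L2P_def by simp
  from PS.integrable_fst'[OF this] show ?thesis by (simp add: set_int_Lam_T)
qed

lemma perf_decomp:
  assumes a: "L2P (hat a)" and g: "L2P (hat g)" and u: "L2P (hat u)"
  shows "perf M T X0 \<gamma> \<phi> \<rho> S h G a g u = integral\<^sup>L P (Af a g u) + Wt u"
proof -
  define F1 where "F1 \<omega> = (LINT t:{0..T}|lborel. (a t \<omega> - \<gamma> / 2 * u t \<omega> - h (g t \<omega> + volterra G u t \<omega>)) * u t \<omega>)" for \<omega>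
  define R where "R \<omega> = - (\<phi> / 2 * (LINT t:{0..T}|lborel. (inventory X0 u t \<omega>)\<^sup>2)) - \<rho> / 2 * (inventory X0 u T \<omega>)\<^sup>2" for \<omega>
  have F1eq: "F1 \<omega> = integral\<^sup>L Lam (\<lambda>t. Af a g u (\<omega>, t))" for \<omega>
    unfolding F1_def Af_def by (simp add: set_int_Lam_T)
  have iF1: "integrable M F1" using PS.integrable_fst'[OF Af_int[OF a g u]] unfolding F1eq .
  have eF1: "integral\<^sup>L M F1 = integral\<^sup>L P (Af a g u)" using PS.integral_fst'[OF Af_int[OF a g u]] unfolding F1eq .
  have iR: "integrable M R" unfolding R_def using I_int[OF u] XT_int[OF u] by auto
  have "perf M T X0 \<gamma> \<phi> \<rho> S h G a g u = (\<integral>\<omega>. F1 \<omega> + R \<omega> \<partial>M) + X0 * (\<integral>\<omega>. S T \<omega> \<partial>M)"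
    unfolding perf_def F1_def R_def by (simp add: algebra_simps)
  also have "\<dots> = integral\<^sup>L P (Af a g u) + Wt u"
    using iF1 iR eF1 unfolding Wt_def R_def by simp
  finally show ?thesis .
qed

lemma Wt_le:
  assumes "L2P (hat u)"
  shows "Wt u \<le> X0 * (\<integral>\<omega>. S T \<omega> \<partial>M)"
proof -
  have "0 \<le> (\<integral>\<omega>. - (- (\<phi> / 2 * (LINT t:{0..T}|lborel. (inventory X0 u t \<omega>)\<^sup>2))
           - \<rho> / 2 * (inventory X0 u T \<omega>)\<^sup>2) \<partial>M)"
  proof (rule integral_nonneg_AE, rule AE_I2)
    fix \<omega>
    have "0 \<le> (LINT t:{0..T}|lborel. (inventory X0 u t \<omega>)\<^sup>2)"
      unfolding set_int_Lam_T by (rule integral_nonneg_AE) auto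
    then show "0 \<le> - (- (\<phi> / 2 * (LINT t:{0..T}|lborel. (inventory X0 u t \<omega>)\<^sup>2))
           - \<rho> / 2 * (inventory X0 u T \<omega>)\<^sup>2)"
      using \<phi>_nn \<rho>_nn by simp
  qed
  then show ?thesis unfolding Wt_def by (simp only: Bochner_Integration.integral_minus)
qed

lemma Af_zero: "Af a g (\<lambda>t \<omega>. 0) = (\<lambda>p. 0)"
  unfolding Af_def by (simp add: hat_def case_prod_beta')

lemma perf_zero:
  assumes a: "L2P (hat a)" and g: "L2P (hat g)"
  shows "perf M T X0 \<gamma> \<phi> \<rho> S h G a g (\<lambda>t \<omega>. 0) = Wt (\<lambda>t \<omega>. 0)"
proof -
  have "L2P (hat (\<lambda>t \<omega>. 0::real))" using L2P_const[of 0] by (simp add: hat_def case_prod_beta')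
  from perf_decomp[OF a g this] show ?thesis by (simp add: Af_zero)
qed


definition nrm :: "('a \<times> real \<Rightarrow> real) \<Rightarrow> real" where
  "nrm f = integral\<^sup>L P (\<lambda>p. (f p)\<^sup>2)"

lemma nrm_nn: "nrm f \<ge> 0" unfolding nrm_def by (rule integral_nonneg_AE) auto

lemma perturb:
  assumes a: "L2P (hat a)" and a': "L2P (hat a')" and g: "L2P (hat g)" and g': "L2P (hat g')"
    and u: "L2P (hat u)" and c: "c > 0"
  shows "\<bar>integral\<^sup>L P (Af a' g' u) - integral\<^sup>L P (Af a g u)\<bar>
     \<le> (nrm (\<lambda>p. hat a' p - hat a p) + L\<^sup>2 * nrm (\<lambda>p. hat g' p - hat g p)) / c + c / 2 * nrm (hat u)"
proof -
  define R where "R p = ((hat a' p - hat a p)\<^sup>2 + L\<^sup>2 * (hat g' p - hat g p)\<^sup>2) / c + c / 2 * (hat u p)\<^sup>2" for p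
  have iD: "integrable P (\<lambda>p. Af a' g' u p - Af a g u p)" using Af_int[OF a g u] Af_int[OF a' g' u] by auto
  have iR: "integrable P R" unfolding R_def
    using L2P_diff[OF a' a] L2P_diff[OF g' g] u unfolding L2P_def by auto
  have pw: "\<bar>Af a' g' u p - Af a g u p\<bar> \<le> R p" for p
  proof -
    let ?da = "hat a' p - hat a p" and ?dg = "hat g' p - hat g p" and ?u = "hat u p"
    let ?V = "hat (volterra G u) p"
    have "Af a' g' u p - Af a g u p = (?da - (h (hat g' p + ?V) - h (hat g p + ?V))) * ?u"
      unfolding Af_def by (simp add: algebra_simps)
    then have "\<bar>Af a' g' u p - Af a g u p\<bar> = \<bar>?da - (h (hat g' p + ?V) - h (hat g p + ?V))\<bar> * \<bar>?u\<bar>"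
      by (simp add: abs_mult)
    also have "\<dots> \<le> (\<bar>?da\<bar> + L * \<bar>?dg\<bar>) * \<bar>?u\<bar>"
    proof (rule mult_right_mono)
      have "\<bar>h (hat g' p + ?V) - h (hat g p + ?V)\<bar> \<le> L * \<bar>?dg\<bar>" using h_lip[of "hat g' p + ?V" "hat g p + ?V"] by simp
      then show "\<bar>?da - (h (hat g' p + ?V) - h (hat g p + ?V))\<bar> \<le> \<bar>?da\<bar> + L * \<bar>?dg\<bar>" by linarith
    qed simp
    also have "\<dots> \<le> (\<bar>?da\<bar> + L * \<bar>?dg\<bar>)\<^sup>2 / (2*c) + c * \<bar>?u\<bar>\<^sup>2 / 2" by (rule young[OF c])
    also have "\<dots> \<le> (2 * \<bar>?da\<bar>\<^sup>2 + 2 * (L * \<bar>?dg\<bar>)\<^sup>2) / (2*c) + c * \<bar>?u\<bar>\<^sup>2 / 2"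
      using sq_add_le[of "\<bar>?da\<bar>" "L * \<bar>?dg\<bar>"] c by (intro add_right_mono divide_right_mono) auto
    also have "\<dots> = R p" unfolding R_def using c by (simp add: field_simps power_mult_distrib)
    finally show ?thesis .
  qed
  have "integral\<^sup>L P (\<lambda>p. Af a' g' u p - Af a g u p) \<le> integral\<^sup>L P R"
    using pw by (intro integral_mono[OF iD iR]) (simp add: abs_le_iff)
  moreover have "- integral\<^sup>L P (\<lambda>p. Af a' g' u p - Af a g u p) \<le> integral\<^sup>L P R"
  proof -
    have "integral\<^sup>L P (\<lambda>p. - (Af a' g' u p - Af a g u p)) \<le> integral\<^sup>L P R"
      using pw Af_int[OF a g u] Af_int[OF a' g' u] by (intro integral_mono[OF _ iR]) (auto simp: abs_le_iff)
    then show ?thesis by (simp only: Bochner_Integration.integral_minus)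
  qed
  moreover have "integral\<^sup>L P (\<lambda>p. Af a' g' u p - Af a g u p) = integral\<^sup>L P (Af a' g' u) - integral\<^sup>L P (Af a g u)"
    using Af_int[OF a g u] Af_int[OF a' g' u] by simp
  moreover have "integral\<^sup>L P R = (nrm (\<lambda>p. hat a' p - hat a p) + L\<^sup>2 * nrm (\<lambda>p. hat g' p - hat g p)) / c + c / 2 * nrm (hat u)"
    unfolding R_def nrm_def
    using L2P_diff[OF a' a] L2P_diff[OF g' g] u unfolding L2P_def by simp
  ultimately show ?thesis by linarith
qed


lemma measure_P: "measure P (space P) = T"
proof -
  have "emeasure P (space M \<times> space Lam) = emeasure M (space M) * emeasure Lam (space Lam)"
    by (rule L.emeasure_pair_measure_Times[OF sets.top sets.top])
  then have "emeasure P (space P) = ennreal T" using emeasure_Lam by (simp add: space_pair_measure emeasure_space_1)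
  then show ?thesis using T_pos by (simp add: measure_def)
qed

lemma pw_coercive:
  fixes a u g V C \<zeta> \<eta> :: real
  assumes C: "C > 0" and z: "0<\<zeta>" "\<zeta><1" and hg: "\<bar>h (g + V)\<bar> \<le> C*(1 + \<bar>g + V\<bar> powr \<zeta>)" and e: "\<eta> > 0"
  shows "(a - \<gamma> / 2 * u - h (g + V)) * u \<le> 4/\<gamma> * a\<^sup>2
     + 4*C\<^sup>2/\<gamma> * (1 + (1/\<eta>) powr (\<zeta>/(1-\<zeta>)) + 2*\<eta>*g\<^sup>2 + 2*\<eta>*V\<^sup>2) - 5*\<gamma>/16 * u\<^sup>2"
proof -
  define Z where "Z = g + V"
  define K where "K = (1/\<eta>) powr (\<zeta>/(1-\<zeta>))"
  have c: "\<gamma>/8 > 0" using \<gamma>_pos by simp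
  have y1: "\<bar>a\<bar> * \<bar>u\<bar> \<le> 4/\<gamma> * a\<^sup>2 + \<gamma>/16 * u\<^sup>2"
    using young[OF c, of "\<bar>a\<bar>" "\<bar>u\<bar>"] by (simp add: field_simps)
  have y2: "C * \<bar>u\<bar> \<le> 4/\<gamma> * C\<^sup>2 + \<gamma>/16 * u\<^sup>2"
    using young[OF c, of "C" "\<bar>u\<bar>"] by (simp add: field_simps)
  have y3: "(C * \<bar>Z\<bar> powr \<zeta>) * \<bar>u\<bar> \<le> 4/\<gamma> * (C\<^sup>2 * \<bar>Z\<bar> powr (2*\<zeta>)) + \<gamma>/16 * u\<^sup>2"
  proof -
    have "\<bar>Z\<bar> powr \<zeta> * \<bar>Z\<bar> powr \<zeta> = \<bar>Z\<bar> powr (2*\<zeta>)"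
      by (simp add: powr_add[symmetric])
    then have e2: "(C * \<bar>Z\<bar> powr \<zeta>)\<^sup>2 = C\<^sup>2 * \<bar>Z\<bar> powr (2*\<zeta>)"
      by (simp add: power_mult_distrib power2_eq_square)
    have "(C * \<bar>Z\<bar> powr \<zeta>) * \<bar>u\<bar> \<le> (C * \<bar>Z\<bar> powr \<zeta>)\<^sup>2 / (2*(\<gamma>/8)) + (\<gamma>/8) * \<bar>u\<bar>\<^sup>2 / 2"
      by (rule young[OF c])
    also have "\<dots> = 4/\<gamma> * (C\<^sup>2 * \<bar>Z\<bar> powr (2*\<zeta>)) + \<gamma>/16 * u\<^sup>2"
      unfolding e2 by (simp add: field_simps)
    finally show ?thesis .
  qed
  have ps: "\<bar>Z\<bar> powr (2*\<zeta>) \<le> \<eta> * (2*g\<^sup>2 + 2*V\<^sup>2) + K"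
  proof -
    have "\<bar>Z\<bar> powr (2*\<zeta>) \<le> \<eta> * \<bar>Z\<bar>\<^sup>2 + K" unfolding K_def by (rule powr_small) (use e z in auto)
    also have "\<dots> \<le> \<eta> * (2*g\<^sup>2 + 2*V\<^sup>2) + K"
      using sq_add_le[of g V] e unfolding Z_def by (intro add_right_mono mult_left_mono) auto
    finally show ?thesis .
  qed
  have hb: "- (h Z * u) \<le> C * \<bar>u\<bar> + (C * \<bar>Z\<bar> powr \<zeta>) * \<bar>u\<bar>"
  proof -
    have "- (h Z * u) \<le> \<bar>h Z\<bar> * \<bar>u\<bar>" by (simp add: abs_mult[symmetric])
    also have "\<dots> \<le> C*(1 + \<bar>Z\<bar> powr \<zeta>) * \<bar>u\<bar>" using hg unfolding Z_def by (intro mult_right_mono) auto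
    finally show ?thesis by (simp add: algebra_simps)
  qed
  have au: "a * u \<le> \<bar>a\<bar> * \<bar>u\<bar>" by (simp add: abs_mult[symmetric])
  have "4/\<gamma> * (C\<^sup>2 * \<bar>Z\<bar> powr (2*\<zeta>)) \<le> 4/\<gamma> * (C\<^sup>2 * (\<eta> * (2*g\<^sup>2 + 2*V\<^sup>2) + K))"
    using ps \<gamma>_pos by (intro mult_left_mono) auto
  then have "(a - \<gamma> / 2 * u - h Z) * u \<le> 4/\<gamma> * a\<^sup>2 + 4/\<gamma> * C\<^sup>2 + 4/\<gamma> * (C\<^sup>2 * (\<eta> * (2*g\<^sup>2 + 2*V\<^sup>2) + K))
       + 3 * (\<gamma>/16 * u\<^sup>2) - \<gamma>/2 * u\<^sup>2"
    using y1 y2 y3 hb au by (simp add: algebra_simps power2_eq_square)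
  then show ?thesis unfolding Z_def K_def by (simp add: algebra_simps)
qed

lemma coercive:
  assumes a: "L2P (hat a)" and g: "L2P (hat g)" and u: "L2P (hat u)"
    and C: "C > 0" and z: "0<\<zeta>" "\<zeta><1" and hg: "\<forall>x. \<bar>h x\<bar> \<le> C*(1 + \<bar>x\<bar> powr \<zeta>)"
  defines "\<eta> \<equiv> \<gamma>\<^sup>2 / (128 * C\<^sup>2 * T * B)"
  shows "integral\<^sup>L P (Af a g u) \<le> 4/\<gamma> * nrm (hat a)
     + 4*C\<^sup>2/\<gamma> * (T + (1/\<eta>) powr (\<zeta>/(1-\<zeta>)) * T + 2*\<eta>*nrm (hat g)) - \<gamma>/4 * nrm (hat u)"
proof -
  define K where "K = (1/\<eta>) powr (\<zeta>/(1-\<zeta>))"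
  have e: "\<eta> > 0" unfolding \<eta>_def using \<gamma>_pos C T_pos B_pos by simp
  let ?V = "hat (volterra G u)"
  define R where "R p = 4/\<gamma> * (hat a p)\<^sup>2
     + 4*C\<^sup>2/\<gamma> * (1 + K + 2*\<eta>*(hat g p)\<^sup>2 + 2*\<eta>*(?V p)\<^sup>2) - 5*\<gamma>/16 * (hat u p)\<^sup>2" for p
  have Vl: "L2P ?V" using volt_L2P(1)[OF u] .
  have iR: "integrable P R" unfolding R_def using a g u Vl unfolding L2P_def by auto
  have "integral\<^sup>L P (Af a g u) \<le> integral\<^sup>L P R"
  proof (rule integral_mono[OF Af_int[OF a g u] iR])
    fix p
    show "Af a g u p \<le> R p" unfolding Af_def R_def K_def
      by (rule pw_coercive[OF C z _ e]) (use hg in auto)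
  qed
  also have "integral\<^sup>L P R = 4/\<gamma> * nrm (hat a) + 4*C\<^sup>2/\<gamma> * ((1 + K) * T + 2*\<eta>*nrm (hat g) + 2*\<eta>*nrm ?V)
      - 5*\<gamma>/16 * nrm (hat u)"
    unfolding R_def nrm_def using a g u Vl measure_P unfolding L2P_def by (simp add: algebra_simps)
  also have "\<dots> \<le> 4/\<gamma> * nrm (hat a) + 4*C\<^sup>2/\<gamma> * ((1 + K) * T + 2*\<eta>*nrm (hat g) + 2*\<eta>*(B*T*nrm (hat u)))
      - 5*\<gamma>/16 * nrm (hat u)"
    using volt_L2P(2)[OF u] e \<gamma>_pos unfolding nrm_def
    by (intro add_right_mono diff_right_mono mult_left_mono add_left_mono) auto
  also have "4*C\<^sup>2/\<gamma> * (2*\<eta>*(B*T*nrm (hat u))) = \<gamma>/16 * nrm (hat u)"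
    unfolding \<eta>_def using \<gamma>_pos C T_pos B_pos by (simp add: field_simps power2_eq_square)
  then have "4/\<gamma> * nrm (hat a) + 4*C\<^sup>2/\<gamma> * ((1 + K) * T + 2*\<eta>*nrm (hat g) + 2*\<eta>*(B*T*nrm (hat u)))
      - 5*\<gamma>/16 * nrm (hat u) = 4/\<gamma> * nrm (hat a)
     + 4*C\<^sup>2/\<gamma> * (T + K * T + 2*\<eta>*nrm (hat g)) - \<gamma>/4 * nrm (hat u)"
    by (simp add: algebra_simps)
  finally show ?thesis unfolding K_def .
qed


lemma nrm_zero: "nrm (hat (\<lambda>t \<omega>. 0)) = 0"
  unfolding nrm_def by (simp add: hat_def case_prod_beta')

lemma nrm_tri:
  assumes "L2P (hat a)" "L2P (hat b)"
  shows "nrm (hat b) \<le> 2 * nrm (hat a) + 2 * nrm (\<lambda>p. hat b p - hat a p)"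
proof -
  have "nrm (hat b) \<le> integral\<^sup>L P (\<lambda>p. 2 * (hat a p)\<^sup>2 + 2 * (hat b p - hat a p)\<^sup>2)"
    unfolding nrm_def
  proof (rule integral_mono)
    show "integrable P (\<lambda>p. (hat b p)\<^sup>2)" using assms unfolding L2P_def by simp
    show "integrable P (\<lambda>p. 2 * (hat a p)\<^sup>2 + 2 * (hat b p - hat a p)\<^sup>2)"
      using assms L2P_diff[OF assms(2,1)] unfolding L2P_def by simp
    fix p show "(hat b p)\<^sup>2 \<le> 2 * (hat a p)\<^sup>2 + 2 * (hat b p - hat a p)\<^sup>2"
      using sq_add_le[of "hat a p" "hat b p - hat a p"] by simp
  qed
  also have "\<dots> = 2 * nrm (hat a) + 2 * nrm (\<lambda>p. hat b p - hat a p)"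
    unfolding nrm_def using assms L2P_diff[OF assms(2,1)] unfolding L2P_def by simp
  finally show ?thesis .
qed

lemma final:
  fixes \<alpha> g :: "real \<Rightarrow> 'a \<Rightarrow> real" and \<alpha>n gn :: "nat \<Rightarrow> real \<Rightarrow> 'a \<Rightarrow> real"
  assumes C: "C > 0" and z: "0<\<zeta>" "\<zeta><1" and hg: "\<forall>x. \<bar>h x\<bar> \<le> C*(1 + \<bar>x\<bar> powr \<zeta>)"
    and aL: "L2P (hat \<alpha>)" and gL: "L2P (hat g)" and anL: "\<And>n. L2P (hat (\<alpha>n n))" and gnL: "\<And>n. L2P (hat (gn n))"
    and ea: "(\<lambda>n. nrm (\<lambda>p. hat (\<alpha>n n) p - hat \<alpha> p)) \<longlonglongrightarrow> 0"
    and eg: "(\<lambda>n. nrm (\<lambda>p. hat (gn n) p - hat g p)) \<longlonglongrightarrow> 0"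
    and U: "\<And>u. u \<in> U \<Longrightarrow> L2P (hat u)" and U0: "(\<lambda>t \<omega>. 0) \<in> U"
  shows "(\<lambda>n. SUP u\<in>U. ereal (perf M T X0 \<gamma> \<phi> \<rho> S h G (\<alpha>n n) (gn n) u))
     \<longlonglongrightarrow> (SUP u\<in>U. ereal (perf M T X0 \<gamma> \<phi> \<rho> S h G \<alpha> g u))"
proof -
  define \<eta> where "\<eta> = \<gamma>\<^sup>2 / (128 * C\<^sup>2 * T * B)"
  have e: "\<eta> > 0" unfolding \<eta>_def using \<gamma>_pos C T_pos B_pos by simp
  define KK where "KK x y = 4/\<gamma> * x + 4*C\<^sup>2/\<gamma> * (T + (1/\<eta>) powr (\<zeta>/(1-\<zeta>)) * T + 2*\<eta>*y)" for x y
  have KK_mono: "KK x y \<le> KK x' y'" if "x \<le> x'" "y \<le> y'" for x y x' y'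
  proof -
    have "4/\<gamma> * x \<le> 4/\<gamma> * x'" using that \<gamma>_pos by (intro mult_left_mono) auto
    moreover have "2*\<eta>*y \<le> 2*\<eta>*y'" using that e by simp
    then have "4*C\<^sup>2/\<gamma> * (T + (1/\<eta>) powr (\<zeta>/(1-\<zeta>)) * T + 2*\<eta>*y) \<le> 4*C\<^sup>2/\<gamma> * (T + (1/\<eta>) powr (\<zeta>/(1-\<zeta>)) * T + 2*\<eta>*y')"
      using \<gamma>_pos by (intro mult_left_mono) auto
    ultimately show ?thesis unfolding KK_def by linarith
  qed
  define c0 where "c0 = X0 * (\<integral>\<omega>. S T \<omega> \<partial>M)"
  define m0 where "m0 = Wt (\<lambda>t \<omega>. 0)"
  define J where "J n u = perf M T X0 \<gamma> \<phi> \<rho> S h G (\<alpha>n n) (gn n) u" for n u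
  define Ji where "Ji u = perf M T X0 \<gamma> \<phi> \<rho> S h G \<alpha> g u" for u
  define ea' where "ea' n = nrm (\<lambda>p. hat (\<alpha>n n) p - hat \<alpha> p)" for n
  define eg' where "eg' n = nrm (\<lambda>p. hat (gn n) p - hat g p)" for n
  have bound_gen: "perf M T X0 \<gamma> \<phi> \<rho> S h G a g' u \<le> KK (nrm (hat a)) (nrm (hat g')) + c0 - \<gamma>/4 * nrm (hat u)"
    if "L2P (hat a)" "L2P (hat g')" "u \<in> U" for a g' u
    using perf_decomp[OF that(1,2) U[OF that(3)]] coercive[OF that(1,2) U[OF that(3)] C z hg]
      Wt_le[OF U[OF that(3)]] unfolding KK_def c0_def \<eta>_def by linarith
  have ev1: "eventually (\<lambda>n. ea' n < 1) sequentially" using order_tendstoD(2)[OF ea] unfolding ea'_def by simp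
  have ev2: "eventually (\<lambda>n. eg' n < 1) sequentially" using order_tendstoD(2)[OF eg] unfolding eg'_def by simp
  obtain n0 where n0: "\<And>n. n \<ge> n0 \<Longrightarrow> ea' n < 1 \<and> eg' n < 1"
    using eventually_conj[OF ev1 ev2] unfolding eventually_sequentially by blast
  define Kb where "Kb = KK (2 * nrm (hat \<alpha>) + 2) (2 * nrm (hat g) + 2)"
  have bn: "J n u \<le> Kb + c0 - \<gamma>/4 * nrm (hat u)" if "n \<ge> n0" "u \<in> U" for n u
  proof -
    have "nrm (hat (\<alpha>n n)) \<le> 2 * nrm (hat \<alpha>) + 2"
      using nrm_tri[OF aL anL[of n]] n0[OF that(1)] unfolding ea'_def by linarith
    moreover have "nrm (hat (gn n)) \<le> 2 * nrm (hat g) + 2"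
      using nrm_tri[OF gL gnL[of n]] n0[OF that(1)] unfolding eg'_def by linarith
    ultimately have "KK (nrm (hat (\<alpha>n n))) (nrm (hat (gn n))) \<le> Kb" unfolding Kb_def by (rule KK_mono)
    then show ?thesis using bound_gen[OF anL gnL that(2), of n n] unfolding J_def by linarith
  qed
  have bi: "Ji u \<le> Kb + c0 - \<gamma>/4 * nrm (hat u)" if "u \<in> U" for u
  proof -
    have "KK (nrm (hat \<alpha>)) (nrm (hat g)) \<le> Kb" unfolding Kb_def
      using nrm_nn[of "hat \<alpha>"] nrm_nn[of "hat g"] by (intro KK_mono) auto
    then show ?thesis using bound_gen[OF aL gL that] unfolding Ji_def by linarith
  qed
  have J0: "J n (\<lambda>t \<omega>. 0) = m0" for n unfolding J_def m0_def by (rule perf_zero[OF anL gnL])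
  have Ji0: "Ji (\<lambda>t \<omega>. 0) = m0" unfolding Ji_def m0_def by (rule perf_zero[OF aL gL])
  have m0le: "m0 \<le> Kb + c0" using bi[OF U0] Ji0 nrm_zero by simp
  define R where "R = 4 * (Kb + c0 - m0 + 1) / \<gamma>"
  have Rp: "R > 0" unfolding R_def using m0le \<gamma>_pos by simp
  have big: "Kb + c0 - \<gamma>/4 * nrm (hat u) < m0" if "nrm (hat u) > R" for u
  proof -
    have "\<gamma>/4 * R < \<gamma>/4 * nrm (hat u)" using that \<gamma>_pos by simp
    moreover have "\<gamma>/4 * R = Kb + c0 - m0 + 1" unfolding R_def using \<gamma>_pos by simp
    ultimately show ?thesis by linarith
  qed
  define si where "si = (SUP u\<in>U. ereal (Ji u))"
  define sn where "sn n = (SUP u\<in>U. ereal (J n u))" for n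
  have si_lo: "ereal m0 \<le> si" unfolding si_def using SUP_upper[OF U0, of "\<lambda>u. ereal (Ji u)"] Ji0 by simp
  have si_hi: "si \<le> ereal (Kb + c0)" unfolding si_def
  proof (intro SUP_least)
    fix u assume u: "u \<in> U"
    have "0 \<le> \<gamma>/4 * nrm (hat u)" using \<gamma>_pos nrm_nn[of "hat u"] by simp
    then show "ereal (Ji u) \<le> ereal (Kb + c0)" using bi[OF u] by simp
  qed
  obtain r where r: "si = ereal r" using si_lo si_hi by (cases si) auto
  have sn_lo: "ereal m0 \<le> sn n" for n unfolding sn_def using SUP_upper[OF U0, of "\<lambda>u. ereal (J n u)"] J0 by simp
  have sn_hi: "sn n \<le> ereal (Kb + c0)" if "n \<ge> n0" for n unfolding sn_def
  proof (intro SUP_least)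
    fix u assume u: "u \<in> U"
    have "0 \<le> \<gamma>/4 * nrm (hat u)" using \<gamma>_pos nrm_nn[of "hat u"] by simp
    then show "ereal (J n u) \<le> ereal (Kb + c0)" using bn[OF that u] by simp
  qed
  define rn where "rn n = real_of_ereal (sn n)" for n
  have rn: "sn n = ereal (rn n)" if "n \<ge> n0" for n
    using sn_lo[of n] sn_hi[OF that] unfolding rn_def by (cases "sn n") auto
  have Jir: "Ji u \<le> r" if "u \<in> U" for u
    using SUP_upper[OF that, of "\<lambda>u. ereal (Ji u)"] r unfolding si_def by simp
  have Jnr: "J n u \<le> rn n" if "u \<in> U" "n \<ge> n0" for u n
    using SUP_upper[OF that(1), of "\<lambda>u. ereal (J n u)"] rn[OF that(2)] unfolding sn_def by simp
  have m0r: "m0 \<le> r" using si_lo r by simp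
  have m0rn: "m0 \<le> rn n" if "n \<ge> n0" for n using sn_lo[of n] rn[OF that] by simp
  have key: "\<exists>N. \<forall>n\<ge>N. \<bar>rn n - r\<bar> \<le> \<epsilon>" if \<epsilon>: "\<epsilon> > 0" for \<epsilon>
  proof -
    define \<delta> where "\<delta> = \<epsilon>\<^sup>2 / (2 * R)"
    have \<delta>p: "\<delta> > 0" unfolding \<delta>_def using \<epsilon> Rp by simp
    have "(\<lambda>n. ea' n + L\<^sup>2 * eg' n) \<longlonglongrightarrow> 0 + L\<^sup>2 * 0"
      unfolding ea'_def eg'_def by (intro tendsto_intros ea eg)
    then have "eventually (\<lambda>n. ea' n + L\<^sup>2 * eg' n < \<delta>) sequentially"
      using order_tendstoD(2)[OF _ \<delta>p] by simp
    then obtain n1 where n1: "\<And>n. n \<ge> n1 \<Longrightarrow> ea' n + L\<^sup>2 * eg' n < \<delta>"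
      unfolding eventually_sequentially by blast
    have close: "\<bar>J n u - Ji u\<bar> \<le> \<epsilon>" if "n \<ge> n1" "u \<in> U" "nrm (hat u) \<le> R" for n u
    proof -
      define c where "c = \<epsilon> / R"
      have cp: "c > 0" unfolding c_def using \<epsilon> Rp by simp
      have "J n u - Ji u = integral\<^sup>L P (Af (\<alpha>n n) (gn n) u) - integral\<^sup>L P (Af \<alpha> g u)"
        unfolding J_def Ji_def using perf_decomp[OF anL gnL U[OF that(2)]] perf_decomp[OF aL gL U[OF that(2)]] by simp
      then have "\<bar>J n u - Ji u\<bar> \<le> (ea' n + L\<^sup>2 * eg' n) / c + c / 2 * nrm (hat u)"
        using perturb[OF aL anL gL gnL U[OF that(2)] cp] unfolding ea'_def eg'_def by simp
      also have "\<dots> \<le> \<delta> / c + c / 2 * R"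
      proof (intro add_mono divide_right_mono mult_left_mono)
        show "ea' n + L\<^sup>2 * eg' n \<le> \<delta>" using n1[OF that(1)] by simp
      qed (use cp that(3) in auto)
      also have "\<delta> / c + c / 2 * R = \<epsilon>" unfolding \<delta>_def c_def using \<epsilon> Rp by (simp add: field_simps power2_eq_square)
      finally show ?thesis .
    qed
    show ?thesis
    proof (intro exI allI impI)
      fix n assume nN: "max n0 n1 \<le> n"
      then have nn0: "n \<ge> n0" and nn1: "n \<ge> n1" by auto
      have up: "J n u \<le> r + \<epsilon>" if u: "u \<in> U" for u
      proof (cases "nrm (hat u) \<le> R")
        case True then show ?thesis using close[OF nn1 u True] Jir[OF u] by linarith
      next
        case False then show ?thesis using bn[OF nn0 u] big[of u] m0r \<epsilon> by linarith
      qed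
      have up2: "Ji u \<le> rn n + \<epsilon>" if u: "u \<in> U" for u
      proof (cases "nrm (hat u) \<le> R")
        case True then show ?thesis using close[OF nn1 u True] Jnr[OF u nn0] by linarith
      next
        case False then show ?thesis using bi[OF u] big[of u] m0rn[OF nn0] \<epsilon> by linarith
      qed
      have "sn n \<le> ereal (r + \<epsilon>)" unfolding sn_def using up by (intro SUP_least) simp
      then have a1: "rn n \<le> r + \<epsilon>" using rn[OF nn0] by simp
      have "si \<le> ereal (rn n + \<epsilon>)" unfolding si_def using up2 by (intro SUP_least) simp
      then have a2: "r \<le> rn n + \<epsilon>" using r by simp
      show "\<bar>rn n - r\<bar> \<le> \<epsilon>" using a1 a2 by linarith
    qed
  qed
  have "rn \<longlonglongrightarrow> r"
  proof (rule LIMSEQ_I)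
    fix \<epsilon> :: real assume "0 < \<epsilon>"
    then obtain N where "\<forall>n\<ge>N. \<bar>rn n - r\<bar> \<le> \<epsilon>/2" using key[of "\<epsilon>/2"] by auto
    then have "\<forall>n\<ge>N. norm (rn n - r) < \<epsilon>" using \<open>0 < \<epsilon>\<close> by (auto simp: real_norm_def)
    then show "\<exists>no. \<forall>n\<ge>no. norm (rn n - r) < \<epsilon>" by blast
  qed
  then have "(\<lambda>n. ereal (rn n)) \<longlonglongrightarrow> ereal r" by (rule tendsto_ereal)
  moreover have "eventually (\<lambda>n. ereal (rn n) = sn n) sequentially"
    unfolding eventually_sequentially using rn by (intro exI[of _ n0] allI impI) simp
  ultimately have "sn \<longlonglongrightarrow> ereal r" by (rule Lim_transform_eventually)
  then have "sn \<longlonglongrightarrow> si" using r by simp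
  then show ?thesis unfolding sn_def si_def J_def Ji_def .
qed


lemma L2norm_nrm:
  assumes "L2proc M F T f" "L2proc M F T g"
  shows "L2norm M T (\<lambda>t \<omega>. f t \<omega> - g t \<omega>) = sqrt (nrm (\<lambda>p. hat f p - hat g p))"
proof -
  have hd: "hat (\<lambda>t \<omega>. f t \<omega> - g t \<omega>) = (\<lambda>p. hat f p - hat g p)" by (auto simp: hat_def)
  have l: "L2P (\<lambda>p. hat f p - hat g p)" using L2P_diff[OF L2P_hat[OF assms(1)] L2P_hat[OF assms(2)]] .
  then have m: "hat (\<lambda>t \<omega>. f t \<omega> - g t \<omega>) \<in> borel_measurable P" unfolding hd L2P_def by simp
  have "(\<integral>\<^sup>+\<omega>. (\<integral>\<^sup>+s\<in>{0..T}. ennreal ((f s \<omega> - g s \<omega>)\<^sup>2) \<partial>lborel) \<partial>M)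
      = (\<integral>\<^sup>+p. ennreal ((hat f p - hat g p)\<^sup>2) \<partial>P)"
    using Q_eq[OF m] unfolding hd by simp
  also have "\<dots> = ennreal (nrm (\<lambda>p. hat f p - hat g p))"
    unfolding nrm_def using l unfolding L2P_def by (intro nn_integral_eq_integral) auto
  finally show ?thesis unfolding L2norm_def using nrm_nn by simp
qed

end

theorem mainTheorem6:
  fixes M :: "'a measure" and F :: "real \<Rightarrow> 'a measure"
    and T X0 \<gamma> \<phi> \<rho> C \<zeta> :: real
    and S g \<alpha> :: "real \<Rightarrow> 'a \<Rightarrow> real"
    and \<alpha>n gn :: "nat \<Rightarrow> real \<Rightarrow> 'a \<Rightarrow> real"
    and h :: "real \<Rightarrow> real" and G :: "real \<Rightarrow> real \<Rightarrow> real"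
  assumes "prob_space M"
    and "T > 0"
    and "usual_filtration M F T"
    and "X0 > 0" and "\<gamma> > 0" and "\<phi> \<ge> 0" and "\<rho> \<ge> 0"
    and "L2proc M F T S"
    and "S T \<in> borel_measurable (F T)" and "integrable M (\<lambda>\<omega>. (S T \<omega>)\<^sup>2)"
    and "L2proc M F T g"
    and "L2proc M F T \<alpha>"
    and "\<forall>t\<in>{0..T}. AE \<omega> in M. \<alpha> t \<omega> = real_cond_exp M (F t) (\<lambda>\<omega>. S T \<omega> - S t \<omega>) \<omega>"
    and "admissible_kernel T G"
    and "\<exists>L. L-lipschitz_on UNIV h"
    and "0 < \<zeta>" and "\<zeta> < 1" and "C > 0"
    and "\<forall>x. \<bar>h x\<bar> \<le> C * (1 + \<bar>x\<bar> powr \<zeta>)"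
    and "\<forall>n. L2proc M F T (\<alpha>n n) \<and> L2proc M F T (gn n)"
    and "(\<lambda>n. L2norm M T (\<lambda>t \<omega>. \<alpha>n n t \<omega> - \<alpha> t \<omega>)) \<longlonglongrightarrow> 0"
    and "(\<lambda>n. L2norm M T (\<lambda>t \<omega>. gn n t \<omega> - g t \<omega>)) \<longlonglongrightarrow> 0"
  shows "(\<lambda>n. SUP u\<in>{u. L2proc M F T u}. ereal (perf M T X0 \<gamma> \<phi> \<rho> S h G (\<alpha>n n) (gn n) u))
           \<longlonglongrightarrow> (SUP u\<in>{u. L2proc M F T u}. ereal (perf M T X0 \<gamma> \<phi> \<rho> S h G \<alpha> g u))"
proof -
  note A = assms
  have subT: "subalgebra M (F T)" using A(2,3) unfolding usual_filtration_def by auto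
  interpret mt M F T using A(1,2) subT by (simp add: mt_def mt_axioms_def)
  obtain B0 where GB0: "\<forall>t\<in>{0..T}. (\<integral>\<^sup>+s\<in>{0..t}. ennreal ((G t s)\<^sup>2) \<partial>lborel) \<le> ennreal B0"
    and Gm: "(\<lambda>(t, s). G t s) \<in> borel_measurable borel"
    using A(14) unfolding admissible_kernel_def by blast
  define B where "B = max B0 1"
  have GB: "(\<integral>\<^sup>+s\<in>{0..t}. ennreal ((G t s)\<^sup>2) \<partial>lborel) \<le> ennreal B" if "0 \<le> t" "t \<le> T" for t
  proof -
    have "ennreal B0 \<le> ennreal B" unfolding B_def by (intro ennreal_leI) simp
    then show ?thesis using GB0 that by (meson atLeastAtMost_iff order_trans)
  qed
  obtain L where hL: "L-lipschitz_on UNIV h" using A(15) by blast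
  interpret mt2 M F T G h L B X0 \<gamma> \<phi> \<rho> S
    using Gm GB hL A(5,6,7) by unfold_locales (auto simp: B_def)
  have an: "\<And>n. L2proc M F T (\<alpha>n n)" and gn: "\<And>n. L2proc M F T (gn n)" using A(20) by auto
  have ea: "(\<lambda>n. nrm (\<lambda>p. hat (\<alpha>n n) p - hat \<alpha> p)) \<longlonglongrightarrow> 0"
  proof -
    have "(\<lambda>n. (L2norm M T (\<lambda>t \<omega>. \<alpha>n n t \<omega> - \<alpha> t \<omega>))\<^sup>2) \<longlonglongrightarrow> 0\<^sup>2"
      by (intro tendsto_power A(21))
    moreover have "(L2norm M T (\<lambda>t \<omega>. \<alpha>n n t \<omega> - \<alpha> t \<omega>))\<^sup>2 = nrm (\<lambda>p. hat (\<alpha>n n) p - hat \<alpha> p)" for n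
      using L2norm_nrm[OF an A(12)] nrm_nn by simp
    ultimately show ?thesis by simp
  qed
  have eg: "(\<lambda>n. nrm (\<lambda>p. hat (gn n) p - hat g p)) \<longlonglongrightarrow> 0"
  proof -
    have "(\<lambda>n. (L2norm M T (\<lambda>t \<omega>. gn n t \<omega> - g t \<omega>))\<^sup>2) \<longlonglongrightarrow> 0\<^sup>2"
      by (intro tendsto_power A(22))
    moreover have "(L2norm M T (\<lambda>t \<omega>. gn n t \<omega> - g t \<omega>))\<^sup>2 = nrm (\<lambda>p. hat (gn n) p - hat g p)" for n
      using L2norm_nrm[OF gn A(11)] nrm_nn by simp
    ultimately show ?thesis by simp
  qed
  have U0: "L2proc M F T (\<lambda>t \<omega>. 0)"
    unfolding L2proc_def progressive_def by simp
  show ?thesis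
    by (rule final[OF A(18,16,17,19) L2P_hat[OF A(12)] L2P_hat[OF A(11)] L2P_hat[OF an] L2P_hat[OF gn] ea eg])
       (use U0 L2P_hat in auto)
qed

end
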